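(* Let $G$ be a graph of order $n$ with no isolated vertices and maximum degree $\Delta$. Then $\gamma_{\rm gr}^t(G) \ge \frac{n}{\Delta}$. Moreover, if $G$ is connected and $\gamma_{\rm gr}^t(G) = \frac{n}{\Delta}$, then $G \cong K_{\Delta,\Delta}$.
   Context: All graphs are finite, simple, without isolated vertices. $N(v)$ denotes the open neighborhood of $v$. A sequence $S=(v_1,\ldots,v_k)$ of distinct vertices of $G$ is a legal (open neighborhood) sequence if $N(v_i)\setminus \bigcup_{j=1}^{i-1} N(v_j)\neq\emptyset$ for every $i\in\{2,\ldots,k\}$. It is a total dominating sequence if moreover the set $\{v_1,\ldots,v_k\}$ is a total dominating set of $G$ (every vertex of $G$ has a neighbor in it). The Grundy total domination number $\gamma_{\rm gr}^t(G)$ is the maximum length of a total dominating sequence of $G$. *)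

theory Defs
  imports Complex_Main
begin

definition graph :: "'a set \<Rightarrow> ('a \<Rightarrow> 'a \<Rightarrow> bool) \<Rightarrow> bool" where
  "graph V E \<longleftrightarrow> finite V \<and> (\<forall>u v. E u v \<longrightarrow> u \<in> V \<and> v \<in> V)
     \<and> (\<forall>u v. E u v \<longrightarrow> E v u) \<and> (\<forall>v. \<not> E v v)"

definition nbhd :: "('a \<Rightarrow> 'a \<Rightarrow> bool) \<Rightarrow> 'a \<Rightarrow> 'a set" where
  "nbhd E v = {u. E v u}"

definition no_isolated :: "'a set \<Rightarrow> ('a \<Rightarrow> 'a \<Rightarrow> bool) \<Rightarrow> bool" where
  "no_isolated V E \<longleftrightarrow> (\<forall>v\<in>V. nbhd E v \<noteq> {})"

definition max_degree :: "'a set \<Rightarrow> ('a \<Rightarrow> 'a \<Rightarrow> bool) \<Rightarrow> nat" where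
  "max_degree V E = Max ((\<lambda>v. card (nbhd E v)) ` V)"

definition connected_graph :: "'a set \<Rightarrow> ('a \<Rightarrow> 'a \<Rightarrow> bool) \<Rightarrow> bool" where
  "connected_graph V E \<longleftrightarrow> (\<forall>u\<in>V. \<forall>v\<in>V. E\<^sup>*\<^sup>* u v)"

definition legal_seq :: "'a set \<Rightarrow> ('a \<Rightarrow> 'a \<Rightarrow> bool) \<Rightarrow> 'a list \<Rightarrow> bool" where
  "legal_seq V E S \<longleftrightarrow> distinct S \<and> set S \<subseteq> V \<and>
     (\<forall>i. 1 \<le> i \<and> i < length S \<longrightarrow>
        nbhd E (S ! i) - (\<Union>j<i. nbhd E (S ! j)) \<noteq> {})"

definition total_dominating_seq :: "'a set \<Rightarrow> ('a \<Rightarrow> 'a \<Rightarrow> bool) \<Rightarrow> 'a list \<Rightarrow> bool" where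
  "total_dominating_seq V E S \<longleftrightarrow> legal_seq V E S \<and> (\<forall>v\<in>V. \<exists>u\<in>set S. E v u)"

definition grundy_total_dom :: "'a set \<Rightarrow> ('a \<Rightarrow> 'a \<Rightarrow> bool) \<Rightarrow> nat" where
  "grundy_total_dom V E = Max (length ` {S. total_dominating_seq V E S})"

definition Kbip_V :: "nat \<Rightarrow> nat \<Rightarrow> (nat \<times> nat) set" where
  "Kbip_V m n = ({..<m} \<times> {0}) \<union> ({..<n} \<times> {1})"

definition Kbip_E :: "nat \<Rightarrow> nat \<Rightarrow> nat \<times> nat \<Rightarrow> nat \<times> nat \<Rightarrow> bool" where
  "Kbip_E m n x y \<longleftrightarrow> x \<in> Kbip_V m n \<and> y \<in> Kbip_V m n \<and> snd x \<noteq> snd y"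

definition graph_iso :: "'a set \<Rightarrow> ('a \<Rightarrow> 'a \<Rightarrow> bool) \<Rightarrow> 'b set \<Rightarrow> ('b \<Rightarrow> 'b \<Rightarrow> bool) \<Rightarrow> bool" where
  "graph_iso V E V' E' \<longleftrightarrow> (\<exists>f. bij_betw f V V' \<and>
     (\<forall>u\<in>V. \<forall>v\<in>V. E u v \<longleftrightarrow> E' (f u) (f v)))"

end

theory Submission
  imports Defs
begin

lemma nb_sub: "graph V E \<Longrightarrow> nbhd E v \<subseteq> V"
  by (auto simp: graph_def nbhd_def)

lemma nb_fin: "graph V E \<Longrightarrow> finite (nbhd E v)"
  using nb_sub by (metis graph_def finite_subset)

lemma union_take: "i \<le> length S \<Longrightarrow> (\<Union>j<i. f (S ! j)) = \<Union>(f ` set (take i S))"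
proof -
  assume i: "i \<le> length S"
  have "set (take i S) = (\<lambda>j. S ! j) ` {..<i}"
  proof
    show "set (take i S) \<subseteq> (\<lambda>j. S ! j) ` {..<i}"
      using i by (auto simp: in_set_conv_nth)
    show "(\<lambda>j. S ! j) ` {..<i} \<subseteq> set (take i S)"
    proof
      fix x assume "x \<in> (\<lambda>j. S ! j) ` {..<i}"
      then obtain j where j: "j < i" "x = S ! j" by auto
      then have "take i S ! j = x" by simp
      moreover have "j < length (take i S)" using i j by simp
      ultimately show "x \<in> set (take i S)" by (metis nth_mem)
    qed
  qed
  then show ?thesis by simp
qed

lemma deg_le: "graph V E \<Longrightarrow> v \<in> V \<Longrightarrow> card (nbhd E v) \<le> max_degree V E"
  unfolding max_degree_def by (rule Max_ge) (auto simp: graph_def)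

lemma count_le: "graph V E \<Longrightarrow> set S \<subseteq> V \<Longrightarrow>
   card (\<Union>(nbhd E ` set S)) \<le> length S * max_degree V E"
proof (induction S)
  case Nil then show ?case by simp
next
  case (Cons a S)
  have "card (\<Union>(nbhd E ` set (a # S))) \<le> card (nbhd E a) + card (\<Union>(nbhd E ` set S))"
    by (simp add: card_Un_le)
  also have "\<dots> \<le> max_degree V E + length S * max_degree V E"
    using Cons deg_le by (intro add_mono) auto
  finally show ?case by simp
qed

lemma count_lt1: "graph V E \<Longrightarrow> set (u # S) \<subseteq> V \<Longrightarrow> card (nbhd E u) < max_degree V E \<Longrightarrow>
   card (\<Union>(nbhd E ` set (u # S))) < length (u # S) * max_degree V E"
proof -
  assume a: "graph V E" "set (u # S) \<subseteq> V" "card (nbhd E u) < max_degree V E"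
  have "card (\<Union>(nbhd E ` set (u # S))) \<le> card (nbhd E u) + card (\<Union>(nbhd E ` set S))"
    by (simp add: card_Un_le)
  also have "\<dots> < max_degree V E + length S * max_degree V E"
    using a count_le[of V E S] by (intro add_less_le_mono) auto
  finally show ?thesis by simp
qed

lemma count_lt2: "graph V E \<Longrightarrow> set (u # v # S) \<subseteq> V \<Longrightarrow> nbhd E u \<inter> nbhd E v \<noteq> {} \<Longrightarrow>
   card (\<Union>(nbhd E ` set (u # v # S))) < length (u # v # S) * max_degree V E"
proof -
  assume a: "graph V E" "set (u # v # S) \<subseteq> V" "nbhd E u \<inter> nbhd E v \<noteq> {}"
  have "card (\<Union>(nbhd E ` set (u # v # S))) \<le> card (nbhd E u \<union> nbhd E v) + card (\<Union>(nbhd E ` set S))"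
    using card_Un_le[of "nbhd E u \<union> nbhd E v" "\<Union>(nbhd E ` set S)"] by (simp add: Un_assoc)
  moreover have "card (nbhd E u \<union> nbhd E v) + card (nbhd E u \<inter> nbhd E v) = card (nbhd E u) + card (nbhd E v)"
    using card_Un_Int[of "nbhd E u" "nbhd E v"] nb_fin[OF a(1)] by simp
  moreover have "card (nbhd E u \<inter> nbhd E v) > 0"
    using a(3) nb_fin[OF a(1)] by (simp add: card_gt_0_iff)
  moreover have "card (nbhd E u) \<le> max_degree V E" "card (nbhd E v) \<le> max_degree V E"
    using a(2) deg_le[OF a(1)] by auto
  moreover have "card (\<Union>(nbhd E ` set S)) \<le> length S * max_degree V E"
    using a count_le[of V E S] by auto
  ultimately show ?thesis by simp
qed

lemma legal_snoc:
  assumes "legal_seq V E S" "w \<in> V" "w \<notin> set S" "S \<noteq> [] \<Longrightarrow> nbhd E w - \<Union>(nbhd E ` set S) \<noteq> {}"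
  shows "legal_seq V E (S @ [w])"
  unfolding legal_seq_def
proof (intro conjI allI impI)
  show "distinct (S @ [w])" "set (S @ [w]) \<subseteq> V" using assms by (auto simp: legal_seq_def)
  fix i assume i: "1 \<le> i \<and> i < length (S @ [w])"
  show "nbhd E ((S @ [w]) ! i) - (\<Union>j<i. nbhd E ((S @ [w]) ! j)) \<noteq> {}"
  proof (cases "i < length S")
    case True
    have "(\<Union>j<i. nbhd E ((S @ [w]) ! j)) = (\<Union>j<i. nbhd E (S ! j))"
      using True by (auto simp: nth_append)
    then show ?thesis using assms(1) True i by (auto simp: legal_seq_def nth_append)
  next
    case False
    then have "i = length S" using i by simp
    moreover have "(\<Union>j<length S. nbhd E ((S @ [w]) ! j)) = (\<Union>j<length S. nbhd E (S ! j))"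
      by (auto simp: nth_append)
    moreover have "(\<Union>j<length S. nbhd E (S ! j)) = \<Union>(nbhd E ` set S)"
      using union_take[of "length S" S "nbhd E"] by simp
    ultimately show ?thesis using assms(4) i by (cases S) auto
  qed
qed

lemma legal_finite: "graph V E \<Longrightarrow> finite {T. legal_seq V E T}"
  by (rule finite_subset[OF _ finite_subset_distinct[of V]]) (auto simp: legal_seq_def graph_def)

lemma extend:
  assumes g: "graph V E" and ni: "no_isolated V E" and l: "legal_seq V E S"
  shows "\<exists>T. total_dominating_seq V E (S @ T)"
proof -
  let ?M = "{T. legal_seq V E (S @ T)}"
  have "(\<lambda>T. S @ T) ` ?M \<subseteq> {T. legal_seq V E T}" by auto
  then have "finite ((\<lambda>T. S @ T) ` ?M)" using legal_finite[OF g] finite_subset by blast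
  then have fin: "finite ?M" by (rule finite_imageD) (simp add: inj_on_def)
  have ne: "[] \<in> ?M" using l by simp
  obtain T where T: "T \<in> ?M" and mx: "\<forall>T'\<in>?M. length T' \<le> length T"
  proof -
    have "finite (length ` ?M)" using fin by simp
    then obtain m where "m \<in> length ` ?M" "\<forall>x\<in>length ` ?M. x \<le> m"
      using ne by (metis Max_ge Max_in empty_iff image_eqI)
    then show ?thesis using that by auto
  qed
  show ?thesis
  proof (intro exI)
    show "total_dominating_seq V E (S @ T)"
      unfolding total_dominating_seq_def
    proof (intro conjI ballI)
      show "legal_seq V E (S @ T)" using T by simp
      fix v assume v: "v \<in> V"
      show "\<exists>u\<in>set (S @ T). E v u"
      proof (rule ccontr)
        assume nv: "\<not> ?thesis"
        obtain w where w: "E v w" using ni v by (auto simp: no_isolated_def nbhd_def)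
        have sym: "\<And>a b. E a b \<Longrightarrow> E b a" using g by (auto simp: graph_def)
        have wV: "w \<in> V" using g w by (auto simp: graph_def)
        have vnot: "v \<notin> \<Union>(nbhd E ` set (S @ T))" using nv sym by (auto simp: nbhd_def)
        have wn: "w \<notin> set (S @ T)" using nv w by auto
        have "legal_seq V E ((S @ T) @ [w])"
          by (rule legal_snoc) (use T wV wn vnot sym[OF w] in \<open>auto simp: nbhd_def\<close>)
        then have "T @ [w] \<in> ?M" by simp
        then show False using mx by fastforce
      qed
    qed
  qed
qed

lemma tds_union: "graph V E \<Longrightarrow> total_dominating_seq V E S \<Longrightarrow> \<Union>(nbhd E ` set S) = V"
  by (auto simp: total_dominating_seq_def graph_def nbhd_def) metis

lemma tds_set: "total_dominating_seq V E S \<Longrightarrow> set S \<subseteq> V"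
  by (simp add: total_dominating_seq_def legal_seq_def)

lemma tds_le_grundy: "graph V E \<Longrightarrow> total_dominating_seq V E S \<Longrightarrow> length S \<le> grundy_total_dom V E"
proof -
  assume g: "graph V E" and t: "total_dominating_seq V E S"
  have "{S. total_dominating_seq V E S} \<subseteq> {T. legal_seq V E T}" by (auto simp: total_dominating_seq_def)
  then have "finite {S. total_dominating_seq V E S}" using legal_finite[OF g] finite_subset by blast
  then show ?thesis unfolding grundy_total_dom_def using t by (intro Max_ge) auto
qed

theorem mainTheorem1:
  fixes V :: "'a set" and E :: "'a \<Rightarrow> 'a \<Rightarrow> bool"
  assumes "graph V E" and "V \<noteq> {}" and "no_isolated V E"
  shows "real (grundy_total_dom V E) \<ge> real (card V) / real (max_degree V E) \<and>
           (connected_graph V E \<and>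
            real (grundy_total_dom V E) = real (card V) / real (max_degree V E) \<longrightarrow>
           graph_iso V E (Kbip_V (max_degree V E) (max_degree V E))
                         (Kbip_E (max_degree V E) (max_degree V E)))"
proof -
  note g = assms(1) and ni = assms(3)
  define D where "D = max_degree V E"
  define \<gamma> where "\<gamma> = grundy_total_dom V E"
  have sym: "\<And>a b. E a b \<Longrightarrow> E b a" using g by (auto simp: graph_def)
  have irr: "\<And>a. \<not> E a a" using g by (auto simp: graph_def)
  have inV: "\<And>a b. E a b \<Longrightarrow> a \<in> V \<and> b \<in> V" using g by (auto simp: graph_def)
  obtain v0 where v0: "v0 \<in> V" using assms(2) by auto
  have "card (nbhd E v0) > 0" using ni v0 nb_fin[OF g] by (auto simp: no_isolated_def card_gt_0_iff)
  then have Dpos: "D > 0" using deg_le[OF g v0] D_def by simp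
  have key: "\<And>S. total_dominating_seq V E S \<Longrightarrow> card V \<le> length S * D \<and> length S \<le> \<gamma>"
    using count_le[OF g] tds_union[OF g] tds_set tds_le_grundy[OF g] D_def \<gamma>_def by metis
  obtain T0 where T0: "total_dominating_seq V E ([] @ T0)"
    using extend[OF g ni, of "[]"] by (auto simp: legal_seq_def)
  have "card V \<le> \<gamma> * D" using key[OF T0[simplified]] by (meson le_trans mult_le_mono1)
  then have part1: "real \<gamma> \<ge> real (card V) / real D"
    using Dpos by (simp add: divide_le_eq) (metis of_nat_le_iff of_nat_mult)
  show ?thesis
  proof (intro conjI impI)
    show "real (grundy_total_dom V E) \<ge> real (card V) / real (max_degree V E)"
      using part1 D_def \<gamma>_def by simp
  next
    assume h: "connected_graph V E \<and> real (grundy_total_dom V E) = real (card V) / real (max_degree V E)"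
    then have "real \<gamma> * real D = real (card V)" using Dpos D_def \<gamma>_def by simp
    then have eq: "\<gamma> * D = card V" by (metis of_nat_eq_iff of_nat_mult)
    have legal1: "\<And>u. u \<in> V \<Longrightarrow> legal_seq V E [u]" by (simp add: legal_seq_def)
    have deg: "card (nbhd E u) = D" if u: "u \<in> V" for u
    proof (rule ccontr)
      assume "card (nbhd E u) \<noteq> D"
      then have lt: "card (nbhd E u) < D" using deg_le[OF g u] D_def by simp
      obtain T where T: "total_dominating_seq V E ([u] @ T)" using extend[OF g ni legal1[OF u]] by auto
      have "card (\<Union>(nbhd E ` set (u # T))) < length (u # T) * D"
        using count_lt1[OF g, of u T] tds_set[OF T] lt D_def by simp
      then have "card V < length (u # T) * D" using tds_union[OF g T] by simp
      also have "\<dots> \<le> \<gamma> * D" by (rule mult_le_mono1) (use key[OF T] in simp)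
      finally show False using eq by simp
    qed
    have disj: "nbhd E u \<inter> nbhd E v = {}"
      if u: "u \<in> V" and v: "v \<in> V" and uv: "u \<noteq> v" and ns: "\<not> nbhd E v \<subseteq> nbhd E u" for u v
    proof (rule ccontr)
      assume ne: "nbhd E u \<inter> nbhd E v \<noteq> {}"
      have "legal_seq V E ([u] @ [v])"
        by (rule legal_snoc) (use legal1[OF u] v uv ns in auto)
      then obtain T where T: "total_dominating_seq V E ([u, v] @ T)" using extend[OF g ni] by fastforce
      have "card (\<Union>(nbhd E ` set (u # v # T))) < length (u # v # T) * D"
        using count_lt2[OF g, of u v T] tds_set[OF T] ne D_def by simp
      then have "card V < length (u # v # T) * D" using tds_union[OF g T] by simp
      also have "\<dots> \<le> \<gamma> * D" by (rule mult_le_mono1) (use key[OF T] in simp)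
      finally show False using eq by simp
    qed
    have same: "nbhd E u = nbhd E v"
      if u: "u \<in> V" and v: "v \<in> V" and x: "x \<in> nbhd E u" "x \<in> nbhd E v" for u v x
      using disj[OF u v] disj[OF v u] x by blast
    obtain v where uv: "E v0 v" using ni v0 by (auto simp: no_isolated_def nbhd_def)
    have vV: "v \<in> V" using inV uv by blast
    define A where "A = nbhd E v"
    define B where "B = nbhd E v0"
    have NA: "nbhd E x = B" if "x \<in> A" for x
      using same[of x v0 v] that inV sym uv by (auto simp: A_def B_def nbhd_def)
    have NB: "nbhd E y = A" if "y \<in> B" for y
      using same[of y v v0] that inV sym uv by (auto simp: A_def B_def nbhd_def)
    have v0A: "v0 \<in> A" using uv sym by (auto simp: A_def nbhd_def)
    have VAB: "V = A \<union> B"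
    proof
      show "A \<union> B \<subseteq> V" using inV by (auto simp: A_def B_def nbhd_def)
      show "V \<subseteq> A \<union> B"
      proof
        fix w assume w: "w \<in> V"
        have "E\<^sup>*\<^sup>* v0 w" using h v0 w by (auto simp: connected_graph_def)
        then show "w \<in> A \<union> B"
        proof induction
          case base then show ?case using v0A by simp
        next
          case (step y z)
          then show ?case using NA NB by (auto simp: nbhd_def)
        qed
      qed
    qed
    have ABd: "A \<inter> B = {}"
    proof (rule ccontr)
      assume "A \<inter> B \<noteq> {}"
      then obtain w where "w \<in> A" "w \<in> B" by auto
      then have "A = B" using NA NB by metis
      then show False using v0A irr by (auto simp: B_def nbhd_def)
    qed
    have cA: "card A = D" using deg[OF vV] A_def by simp
    have cB: "card B = D" using deg[OF v0] B_def by simp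
    have finA: "finite A" "finite B" using nb_fin[OF g] A_def B_def by auto
    obtain hA where hA: "bij_betw hA A {0..<D}" using ex_bij_betw_finite_nat[OF finA(1)] cA by auto
    obtain hB where hB: "bij_betw hB B {0..<D}" using ex_bij_betw_finite_nat[OF finA(2)] cB by auto
    define f where "f w = (if w \<in> A then (hA w, 0::nat) else (hB w, 1))" for w
    have b1: "bij_betw f A ({..<D} \<times> {0})"
    proof -
      have "bij_betw (\<lambda>w. (hA w, 0::nat)) A ({..<D} \<times> {0})"
        using hA unfolding bij_betw_def inj_on_def by (auto simp: atLeast0LessThan)
      then show ?thesis by (rule bij_betw_cong[THEN iffD1, rotated]) (simp add: f_def)
    qed
    have b2: "bij_betw f B ({..<D} \<times> {1})"
    proof -
      have "bij_betw (\<lambda>w. (hB w, 1::nat)) B ({..<D} \<times> {1})"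
        using hB unfolding bij_betw_def inj_on_def by (auto simp: atLeast0LessThan)
      then show ?thesis by (rule bij_betw_cong[THEN iffD1, rotated]) (use ABd in \<open>auto simp: f_def\<close>)
    qed
    have bij: "bij_betw f V (Kbip_V D D)"
      unfolding VAB Kbip_V_def by (rule bij_betw_combine[OF b1 b2]) auto
    have fV: "f w \<in> Kbip_V D D" if "w \<in> V" for w using bij that by (auto simp: bij_betw_def)
    have edges: "E x y \<longleftrightarrow> Kbip_E D D (f x) (f y)" if x: "x \<in> V" and y: "y \<in> V" for x y
    proof -
      have "E x y \<longleftrightarrow> (x \<in> A \<longleftrightarrow> y \<in> B)"
        using NA NB x y VAB ABd by (auto simp: nbhd_def)
      moreover have "snd (f x) \<noteq> snd (f y) \<longleftrightarrow> (x \<in> A \<longleftrightarrow> y \<in> B)"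
        using x y VAB ABd by (auto simp: f_def)
      ultimately show ?thesis using fV x y by (simp add: Kbip_E_def)
    qed
    show "graph_iso V E (Kbip_V (max_degree V E) (max_degree V E)) (Kbip_E (max_degree V E) (max_degree V E))"
      unfolding graph_iso_def D_def[symmetric] using bij edges by blast
  qed
qed

end
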